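(* Let $S_3\nearrow S_4\nearrow\cdots\nearrow S_n$ (with $S_k\subseteq\mathbf D^k$) be a sequence of expansions such that, for every $k=3,\dots,n$, $S_k$ is good, has no bad components, and satisfies $I(S_k)=-2$ and $c(S_k)=2$. Then there is no expansion $S_n\nearrow S_{n+1}\subseteq\mathbf D^{n+1}$ by an isolated $(-3)$-vector.
   Context: $\mathbf D^n$ denotes $\mathbb Z^n$ with basis $e_1,\dots,e_n$ and symmetric bilinear form $e_i\cdot e_j=-\delta_{ij}$. Let $S=\{v_1,\dots,v_n\}\subseteq\mathbf D^n$ be an indexed set of $n$ vectors, and put $E^S_i=\{j: v_j\cdot e_i\ne0\}$. - $S$ satisfies condition (C) if, for all $i,j$: $v_i\cdot v_i=-a_i\le-2$; $v_i\cdot v_j\in\{0,1\}$ when $|i-j|=1$; and $v_i\cdot v_j=0$ when $|i-j|>1$. - The intersection graph of $S$ has vertices $v_1,\dots,v_n$, with an edge between $v_i$ and $v_j$ iff $v_i\cdot v_j=1$. The number $c(S)$ is the number of its connected components. - An element $v_j$ is isolated, final or internal if $\sum_{i\ne j}v_i\cdot v_j$ equals $0$, $1$ or $2$ respectively. - Two vectors $v,w$ are linked if there is $e\in\mathbf D^n$ with $e\cdot e=-1$, $v\cdot e\ne0$ and $w\cdot e\ne0$. - $S$ is irreducible if any two of its elements are joined by a finite chain of elements of $S$ in which consecutive elements are linked. - $S$ is good if it is irreducible and satisfies (C). - $I(S)=\sum_{i=1}^n(-v_i\cdot v_i-3)$. Contraction and expansion. For $e\cdot e=-1$ let $\pi_e(v)=v+(v\cdot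 e)e$. Suppose $S$ satisfies (C), $|v_i\cdot e_j|\le1$ for all $i,j$, and there are indices $h,s,t$ with $E^S_h=\{s,t\}$ and $a_t>2$. Then $$S'=(S\setminus\{v_s,v_t\})\cup\{\pi_{e_h}(v_t)\}\subseteq\langle e_j: j\ne h\rangle\cong\mathbf D^{n-1}$$ is obtained from $S$ by a contraction, written $S\searrow S'$; conversely $S'\nearrow S$ is an expansion. The expansion is said to be by the vector $v_s$. It is an expansion by an isolated (resp. final) $(-a)$-vector if $v_s$ is isolated (resp. final) in $S$ and $v_s\cdot v_s=-a$. Bad components. Let $S'=\{v_1,\dots,v_n\}\subseteq\mathbf D^n$, $n\ge3$, be good, and suppose some $C'=\{v_{s-1},v_s,v_{s+1}\}$ with $1<s<n$ satisfies all of the following: - $C'$ is a connected component of the intersection graph of $S'$; - $v_{s\pm1}\cdot v_{s\pm1}=-2$ and $v_s\cdot v_s<-2$; - $E^{S'}_j=\{s-1,s,s+1\}$ for some $j$. If $S\subseteq\mathbf D^m$ is obtained from $S'$ by a sequence of expansions by final $(-2)$-vectors attached to $C'$, with $c(S)=c(S')$, then the connected component of $S$ corresponding to $C'$ is a bad component of $S$. The number of bad components of $S$ is denoted $b(S)$. *)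

theory Defs
  imports Main
begin

text \<open>Vectors of D^n are integer lists of length n (coordinates w.r.t. e_1..e_n, 0-based);
  an indexed set S = {v_1,...,v_n} is a list of vectors (0-based indices).\<close>

definition dot :: "int list \<Rightarrow> int list \<Rightarrow> int" where
  "dot v w = - (\<Sum>i<length v. v ! i * w ! i)"

definition inD :: "nat \<Rightarrow> int list list \<Rightarrow> bool" where
  "inD n S \<longleftrightarrow> length S = n \<and> (\<forall>v\<in>set S. length v = n)"

definition unitv :: "nat \<Rightarrow> nat \<Rightarrow> int list" where
  "unitv n h = map (\<lambda>j. if j = h then 1 else 0) [0..<n]"

definition proj :: "int list \<Rightarrow> int list \<Rightarrow> int list" where
  "proj e v = map2 (\<lambda>a b. a + dot v e * b) v e"

definition del_nth :: "nat \<Rightarrow> 'a list \<Rightarrow> 'a list" where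
  "del_nth k xs = take k xs @ drop (Suc k) xs"

definition Eset :: "int list list \<Rightarrow> nat \<Rightarrow> nat set" where
  "Eset S i = {j. j < length S \<and> dot (S ! j) (unitv (length (S ! j)) i) \<noteq> 0}"

definition condC :: "int list list \<Rightarrow> bool" where
  "condC S \<longleftrightarrow>
     (\<forall>i<length S. dot (S ! i) (S ! i) \<le> -2) \<and>
     (\<forall>i<length S. \<forall>j<length S. (i + 1 = j \<or> j + 1 = i) \<longrightarrow> dot (S ! i) (S ! j) \<in> {0, 1}) \<and>
     (\<forall>i<length S. \<forall>j<length S. (i + 1 < j \<or> j + 1 < i) \<longrightarrow> dot (S ! i) (S ! j) = 0)"

definition adj :: "int list list \<Rightarrow> nat \<Rightarrow> nat \<Rightarrow> bool" where
  "adj S i j \<longleftrightarrow> i < length S \<and> j < length S \<and> i \<noteq> j \<and> dot (S ! i) (S ! j) = 1"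

definition comp :: "int list list \<Rightarrow> nat \<Rightarrow> nat set" where
  "comp S i = {j. j < length S \<and> (adj S)\<^sup>*\<^sup>* i j}"

definition components :: "int list list \<Rightarrow> nat set set" where
  "components S = comp S ` {..<length S}"

definition ncomp :: "int list list \<Rightarrow> nat" where
  "ncomp S = card (components S)"

definition degree :: "int list list \<Rightarrow> nat \<Rightarrow> int" where
  "degree S j = (\<Sum>i\<in>{..<length S} - {j}. dot (S ! i) (S ! j))"

definition isolated :: "int list list \<Rightarrow> nat \<Rightarrow> bool" where
  "isolated S j \<longleftrightarrow> degree S j = 0"

definition final :: "int list list \<Rightarrow> nat \<Rightarrow> bool" where
  "final S j \<longleftrightarrow> degree S j = 1"

definition linked :: "int list \<Rightarrow> int list \<Rightarrow> bool" where
  "linked v w \<longleftrightarrow> (\<exists>e. length e = length v \<and> dot e e = -1 \<and> dot v e \<noteq> 0 \<and> dot w e \<noteq> 0)"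

definition irreducible_set :: "int list list \<Rightarrow> bool" where
  "irreducible_set S \<longleftrightarrow>
     (\<forall>i<length S. \<forall>j<length S.
        (\<lambda>a b. a < length S \<and> b < length S \<and> linked (S ! a) (S ! b))\<^sup>*\<^sup>* i j)"

definition good :: "int list list \<Rightarrow> bool" where
  "good S \<longleftrightarrow> inD (length S) S \<and> irreducible_set S \<and> condC S"

definition Iinv :: "int list list \<Rightarrow> int" where
  "Iinv S = (\<Sum>i<length S. - dot (S ! i) (S ! i) - 3)"

text \<open>S contracts to S' (S in D^n, S' in D^(n-1)), the removed vector being v_s
  (so S' \<nearrow> S is an expansion by v_s). Vectors and coordinates are renumbered
  order-preservingly; pi_{e_h}(v_t) takes the place of v_t.\<close>
definition contraction_by :: "int list list \<Rightarrow> int list list \<Rightarrow> nat \<Rightarrow> bool" where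
  "contraction_by S S' s \<longleftrightarrow>
     (let n = length S in
       inD n S \<and> condC S \<and> (\<forall>v\<in>set S. \<forall>x\<in>set v. \<bar>x\<bar> \<le> 1) \<and>
       (\<exists>h t. h < n \<and> s < n \<and> t < n \<and> s \<noteq> t \<and> Eset S h = {s, t} \<and>
              - dot (S ! t) (S ! t) > 2 \<and>
              S' = del_nth s (map (del_nth h) (S[t := proj (unitv n h) (S ! t)]))))"

definition contraction :: "int list list \<Rightarrow> int list list \<Rightarrow> bool" where
  "contraction S S' \<longleftrightarrow> (\<exists>s. contraction_by S S' s)"

definition expansion :: "int list list \<Rightarrow> int list list \<Rightarrow> bool" where
  "expansion S' S \<longleftrightarrow> contraction S S'"

definition expansion_isolated :: "int \<Rightarrow> int list list \<Rightarrow> int list list \<Rightarrow> bool" where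
  "expansion_isolated a S' S \<longleftrightarrow>
     (\<exists>s. contraction_by S S' s \<and> isolated S s \<and> dot (S ! s) (S ! s) = - a)"

text \<open>Bad components. badchain S0 C0 S C: S is obtained from S0 by a sequence of expansions
  by final (-2)-vectors each attached to the component tracked from C0; C is the set of indices
  in S corresponding to C0 together with the added vectors.\<close>
definition shift :: "nat \<Rightarrow> nat \<Rightarrow> nat" where
  "shift s i = (if i < s then i else Suc i)"

inductive badchain :: "int list list \<Rightarrow> nat set \<Rightarrow> int list list \<Rightarrow> nat set \<Rightarrow> bool" where
  base: "badchain S0 C0 S0 C0"
| step: "badchain S0 C0 S1 C1 \<Longrightarrow> contraction_by S2 S1 s \<Longrightarrow> final S2 s \<Longrightarrow>
         dot (S2 ! s) (S2 ! s) = -2 \<Longrightarrow> (\<exists>i\<in>C1. adj S2 s (shift s i)) \<Longrightarrow>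
         badchain S0 C0 S2 (insert s (shift s ` C1))"

definition bad_component :: "int list list \<Rightarrow> nat set \<Rightarrow> bool" where
  "bad_component S K \<longleftrightarrow>
     (\<exists>S0 s C. 3 \<le> length S0 \<and> good S0 \<and> 0 < s \<and> Suc s < length S0 \<and>
        comp S0 s = {s - 1, s, Suc s} \<and>
        dot (S0 ! (s - 1)) (S0 ! (s - 1)) = -2 \<and> dot (S0 ! Suc s) (S0 ! Suc s) = -2 \<and>
        dot (S0 ! s) (S0 ! s) < -2 \<and>
        (\<exists>j<length S0. Eset S0 j = {s - 1, s, Suc s}) \<and>
        badchain S0 {s - 1, s, Suc s} S C \<and> ncomp S = ncomp S0 \<and>
        (\<exists>i\<in>C. K = comp S i))"

definition nbad :: "int list list \<Rightarrow> nat" where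
  "nbad S = card {K. bad_component S K}"

end

theory Submission imports Defs begin

definition ip :: "int list list \<Rightarrow> nat \<Rightarrow> nat \<Rightarrow> int" where
  "ip S c d = (\<Sum>j<length S. S ! j ! c * S ! j ! d)"

lemma shift_inj: "inj (shift s)"
  unfolding inj_def shift_def by auto

lemma shift_image: "s \<le> m \<Longrightarrow> shift s ` {..<m} = {..<Suc m} - {s}"
proof (intro equalityI subsetI)
  fix x assume "s \<le> m" "x \<in> shift s ` {..<m}" then show "x \<in> {..<Suc m} - {s}"
    by (auto simp: shift_def)
next
  fix x assume a: "s \<le> m" "x \<in> {..<Suc m} - {s}"
  show "x \<in> shift s ` {..<m}"
  proof (cases "x < s")
    case True then show ?thesis using a by (intro image_eqI[of _ _ x]) (auto simp: shift_def)
  next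
    case False then show ?thesis using a by (intro image_eqI[of _ _ "x - 1"]) (auto simp: shift_def)
  qed
qed

lemma sum_shift:
  fixes f :: "nat \<Rightarrow> int"
  assumes "s \<le> m"
  shows "(\<Sum>j<Suc m. f j) = f s + (\<Sum>j<m. f (shift s j))"
proof -
  have "(\<Sum>j<Suc m. f j) = f s + sum f ({..<Suc m} - {s})" using assms by (intro sum.remove) auto
  also have "sum f ({..<Suc m} - {s}) = sum f (shift s ` {..<m})" using shift_image[OF assms] by simp
  also have "\<dots> = (\<Sum>j<m. f (shift s j))"
    by (subst sum.reindex) (auto intro: inj_on_subset[OF shift_inj])
  finally show ?thesis .
qed

lemma shift_surj: assumes "C < Suc m" "C \<noteq> h" "h \<le> m" shows "\<exists>c<m. C = shift h c"
proof -
  have "C \<in> shift h ` {..<m}" using shift_image[OF assms(3)] assms(1,2) by simp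
  then show ?thesis by blast
qed

lemma shift_lt: "s \<le> m \<Longrightarrow> j < m \<Longrightarrow> shift s j < Suc m"
  by (auto simp: shift_def)

lemma shift_ne: "shift s j \<noteq> s"
  by (auto simp: shift_def)

lemma del_nth_length: "k < length xs \<Longrightarrow> length (del_nth k xs) = length xs - 1"
  by (simp add: del_nth_def)

lemma del_nth_nth: "k < length xs \<Longrightarrow> i < length xs - 1 \<Longrightarrow> del_nth k xs ! i = xs ! shift k i"
proof -
  assume a: "k < length xs" "i < length xs - 1"
  show ?thesis
  proof (cases "i < k")
    case True then show ?thesis using a by (simp add: del_nth_def shift_def nth_append)
  next
    case False then show ?thesis using a by (simp add: del_nth_def shift_def nth_append)
  qed
qed

lemma sum_sub:
  fixes f :: "nat \<Rightarrow> int"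
  assumes "A \<subseteq> {..<N}" "\<And>k. k < N \<Longrightarrow> k \<notin> A \<Longrightarrow> f k = 0"
  shows "(\<Sum>k<N. f k) = sum f A"
  using assms by (intro sum.mono_neutral_right finite_subset[of A "{..<N}"]) auto

lemma dot_sym: "length v = length w \<Longrightarrow> dot v w = dot w v"
  by (simp add: dot_def mult.commute)

lemma condC_dot: "condC S \<Longrightarrow> i < length S \<Longrightarrow> j < length S \<Longrightarrow> i \<noteq> j \<Longrightarrow> dot (S!i) (S!j) \<in> {0,1}"
proof -
  assume a: "condC S" "i < length S" "j < length S" "i \<noteq> j"
  show ?thesis
  proof (cases "i + 1 = j \<or> j + 1 = i")
    case True then show ?thesis using a unfolding condC_def by blast
  next
    case False then have "i + 1 < j \<or> j + 1 < i" using a(4) by arith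
    moreover have "\<forall>i<length S. \<forall>j<length S. (i + 1 < j \<or> j + 1 < i) \<longrightarrow> dot (S ! i) (S ! j) = 0"
      using a(1) unfolding condC_def by blast
    ultimately have "dot (S ! i) (S ! j) = 0" using a(2,3) by blast
    then show ?thesis by simp
  qed
qed

lemma unitv_dot: "h < length v \<Longrightarrow> dot v (unitv (length v) h) = - (v ! h)"
proof -
  assume h: "h < length v"
  have "dot v (unitv (length v) h) = - (\<Sum>i<length v. if i = h then v ! i else 0)"
    unfolding dot_def unitv_def by (intro arg_cong[where f=uminus] sum.cong) auto
  also have "\<dots> = - v ! h" using h by (simp add: sum.delta)
  finally show ?thesis .
qed

lemma bnd_sq: "\<bar>x::int\<bar> \<le> 1 \<Longrightarrow> x \<noteq> 0 \<Longrightarrow> x = 1 \<or> x = -1"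
  by auto


lemma unitv_nth: "i < n \<Longrightarrow> unitv n h ! i = (if i = h then 1 else 0)"
  by (simp add: unitv_def)

lemma proj_nth: "length v = n \<Longrightarrow> i < n \<Longrightarrow> i \<noteq> h \<Longrightarrow> proj (unitv n h) v ! i = v ! i"
  by (simp add: proj_def unitv_def)

lemma proj_length: "length v = n \<Longrightarrow> length (proj (unitv n h) v) = n"
  by (simp add: proj_def unitv_def)

lemma contr_facts:
  assumes "contraction_by S S' s"
  obtains h t m where "length S = Suc m" "h \<le> m" "s \<le> m" "t \<le> m" "s \<noteq> t"
    "\<forall>j<Suc m. length (S ! j) = Suc m" "condC S"
    "\<forall>j<Suc m. \<forall>c<Suc m. \<bar>S ! j ! c\<bar> \<le> 1"
    "\<forall>j<Suc m. S ! j ! h \<noteq> 0 \<longleftrightarrow> (j = s \<or> j = t)"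
    "- dot (S ! t) (S ! t) > 2"
    "length S' = m" "\<forall>j<m. length (S' ! j) = m"
    "\<forall>j<m. \<forall>c<m. S' ! j ! c = S ! (shift s j) ! (shift h c)"
proof -
  define n where "n = length S"
  from assms obtain h t where ht: "inD n S" "condC S" "\<forall>v\<in>set S. \<forall>x\<in>set v. \<bar>x\<bar> \<le> 1"
     "h < n" "s < n" "t < n" "s \<noteq> t" "Eset S h = {s, t}" "- dot (S ! t) (S ! t) > 2"
     "S' = del_nth s (map (del_nth h) (S[t := proj (unitv n h) (S ! t)]))"
    unfolding contraction_by_def n_def Let_def by blast
  obtain m where m: "n = Suc m" using ht(5) by (cases n) auto
  have len: "\<forall>j<Suc m. length (S ! j) = Suc m" using ht(1) m unfolding inD_def by auto
  have bnd: "\<forall>j<Suc m. \<forall>c<Suc m. \<bar>S ! j ! c\<bar> \<le> 1"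
  proof (intro allI impI)
    fix j c assume jc: "j < Suc m" "c < Suc m"
    then have "S ! j \<in> set S" using m n_def by simp
    moreover have "S ! j ! c \<in> set (S ! j)" using jc len by simp
    ultimately show "\<bar>S ! j ! c\<bar> \<le> 1" using ht(3) by blast
  qed
  have E: "\<forall>j<Suc m. S ! j ! h \<noteq> 0 \<longleftrightarrow> (j = s \<or> j = t)"
  proof (intro allI impI)
    fix j assume j: "j < Suc m"
    have "j \<in> Eset S h \<longleftrightarrow> S ! j ! h \<noteq> 0"
      unfolding Eset_def using j len ht(4) m n_def unitv_dot[of h "S ! j"] by auto
    then show "S ! j ! h \<noteq> 0 \<longleftrightarrow> (j = s \<or> j = t)" using ht(8) by auto
  qed
  define P where "P = proj (unitv n h) (S ! t)"
  define T where "T = S[t := P]"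
  have lT: "length T = n" unfolding T_def n_def by simp
  have lP: "length P = n" unfolding P_def using proj_length len ht(6) m by auto
  have lTj: "\<forall>r<n. length (T ! r) = n"
  proof (intro allI impI)
    fix r assume r: "r < n"
    show "length (T ! r) = n"
      by (cases "r = t") (use r lP len m n_def in \<open>simp_all add: T_def\<close>)
  qed
  have S': "S' = del_nth s (map (del_nth h) T)" using ht(10) unfolding T_def P_def .
  have lS': "length S' = m" using S' lT ht(5) m by (simp add: del_nth_length)
  have S'j: "S' ! j = del_nth h (T ! shift s j)" if "j < m" for j
    using that S' lT ht(5) m by (simp add: del_nth_nth shift_lt)
  have lS'j: "\<forall>j<m. length (S' ! j) = m"
    using S'j lTj ht(4,5) m by (simp add: del_nth_length shift_lt)
  have ent: "\<forall>j<m. \<forall>c<m. S' ! j ! c = S ! (shift s j) ! (shift h c)"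
  proof (intro allI impI)
    fix j c assume jc: "j < m" "c < m"
    have r: "shift s j < n" using jc ht(5) m by (simp add: shift_lt)
    have cc: "shift h c < n" "shift h c \<noteq> h" using jc ht(4) m by (auto simp: shift_lt shift_ne)
    have "S' ! j ! c = T ! shift s j ! shift h c"
      using S'j[OF jc(1)] lTj r ht(4) m jc(2) by (simp add: del_nth_nth)
    also have "\<dots> = S ! (shift s j) ! (shift h c)"
    proof (cases "shift s j = t")
      case True
      then show ?thesis unfolding T_def P_def using ht(6) n_def cc len m
        by (simp add: proj_nth)
    next
      case False then show ?thesis unfolding T_def by simp
    qed
    finally show "S' ! j ! c = S ! (shift s j) ! (shift h c)" .
  qed
  show ?thesis
  proof (rule that[of m h t])
    show "length S = Suc m" using m n_def by simp
    show "h \<le> m" "s \<le> m" "t \<le> m" using ht(4,5,6) m by simp_all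
  qed (use ht(2,7,9) len bnd E lS' lS'j ent in blast)+
qed


definition Inv :: "int list list \<Rightarrow> bool" where
  "Inv S \<longleftrightarrow> (\<forall>c<length S. \<forall>d<length S. c \<noteq> d \<longrightarrow> \<bar>ip S c d\<bar> \<le> 1) \<and> (\<forall>c<length S. 2 \<le> ip S c c)"

lemma ip_sym: "ip S c d = ip S d c"
  by (simp add: ip_def mult.commute)

lemma ndot: "- dot v v = (\<Sum>i<length v. v ! i * v ! i)"
  by (simp add: dot_def)

lemma tot:
  assumes "\<forall>j<length S. length (S ! j) = length S"
  shows "(\<Sum>j<length S. - dot (S ! j) (S ! j)) = (\<Sum>c<length S. ip S c c)"
proof -
  have "(\<Sum>j<length S. - dot (S ! j) (S ! j)) = (\<Sum>j<length S. \<Sum>i<length S. S ! j ! i * S ! j ! i)"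
    using assms by (intro sum.cong) (auto simp: dot_def)
  also have "\<dots> = (\<Sum>i<length S. \<Sum>j<length S. S ! j ! i * S ! j ! i)" by (rule sum.swap)
  finally show ?thesis by (simp add: ip_def)
qed

lemma Iinv_tot: "Iinv S = (\<Sum>j<length S. - dot (S ! j) (S ! j)) - 3 * int (length S)"
  by (simp add: Iinv_def sum_subtractf)

lemma abs_prod_le1: "\<bar>a::int\<bar> \<le> 1 \<Longrightarrow> \<bar>b\<bar> \<le> 1 \<Longrightarrow> \<bar>a * b\<bar> \<le> 1"
  by (simp add: abs_mult mult_le_one)

lemma sq_pos: "(a::int) \<noteq> 0 \<Longrightarrow> 1 \<le> a * a"
proof -
  assume "a \<noteq> 0" then have "0 < a * a" by (auto simp: zero_less_mult_iff)
  then show ?thesis by simp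
qed

lemma pm4:
  fixes x y z w :: int
  assumes "\<bar>x\<bar> \<le> 1" "\<bar>y\<bar> \<le> 1" "\<bar>z\<bar> \<le> 1" "\<bar>w\<bar> \<le> 1" "x \<noteq> 0" "y \<noteq> 0" "z \<noteq> 0"
    "1 < \<bar>x * y + z * w\<bar>"
  shows "- (x * z + y * w) \<notin> {0, 1}"
proof -
  have "x = 1 \<or> x = -1" "y = 1 \<or> y = -1" "z = 1 \<or> z = -1" using assms bnd_sq by auto
  moreover have "w = 1 \<or> w = 0 \<or> w = -1" using assms(4) by auto
  ultimately show ?thesis using assms(8) by (elim disjE) auto
qed

lemma ip_shift:
  assumes "length S = Suc m" "s \<le> m" "length S' = m"
    "\<forall>j<m. \<forall>c<m. S' ! j ! c = S ! (shift s j) ! (shift h c)" "c < m" "d < m"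
  shows "ip S (shift h c) (shift h d) = S ! s ! shift h c * S ! s ! shift h d + ip S' c d"
proof -
  have "ip S (shift h c) (shift h d) = S ! s ! shift h c * S ! s ! shift h d +
     (\<Sum>j<m. S ! shift s j ! shift h c * S ! shift s j ! shift h d)"
    unfolding ip_def assms(1) by (rule sum_shift[OF assms(2)])
  also have "(\<Sum>j<m. S ! shift s j ! shift h c * S ! shift s j ! shift h d) = ip S' c d"
    unfolding ip_def assms(3) using assms(4,5,6) by (intro sum.cong) auto
  finally show ?thesis .
qed

lemma sum_two:
  fixes f :: "nat \<Rightarrow> int"
  assumes "s < N" "t < N" "s \<noteq> t" "\<And>k. k < N \<Longrightarrow> k \<noteq> s \<Longrightarrow> k \<noteq> t \<Longrightarrow> f k = 0"
  shows "(\<Sum>k<N. f k) = f s + f t"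
proof -
  have "(\<Sum>k<N. f k) = sum f {s, t}" using assms by (intro sum_sub) auto
  then show ?thesis using assms(3) by simp
qed

lemma sum_one:
  fixes f :: "nat \<Rightarrow> int"
  assumes "d < N" "\<And>k. k < N \<Longrightarrow> k \<noteq> d \<Longrightarrow> f k = 0"
  shows "(\<Sum>k<N. f k) = f d"
proof -
  have "(\<Sum>k<N. f k) = sum f {d}" using assms by (intro sum_sub) auto
  then show ?thesis by simp
qed

lemma sq_sum_ge:
  fixes g :: "nat \<Rightarrow> int"
  assumes "\<And>k. 0 \<le> g k" "A \<subseteq> {..<N}"
  shows "sum g A \<le> (\<Sum>k<N. g k)"
  using assms by (intro sum_mono2) auto


lemma step_inv:
  assumes c: "contraction_by S S' s" and I: "Iinv S = Iinv S'" and inv: "Inv S'"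
  shows "Inv S"
proof -
  obtain h t m where f: "length S = Suc m" "h \<le> m" "s \<le> m" "t \<le> m" "s \<noteq> t"
    "\<forall>j<Suc m. length (S ! j) = Suc m" "condC S"
    "\<forall>j<Suc m. \<forall>c<Suc m. \<bar>S ! j ! c\<bar> \<le> 1"
    "\<forall>j<Suc m. S ! j ! h \<noteq> 0 \<longleftrightarrow> (j = s \<or> j = t)"
    "- dot (S ! t) (S ! t) > 2"
    "length S' = m" "\<forall>j<m. length (S' ! j) = m"
    "\<forall>j<m. \<forall>c<m. S' ! j ! c = S ! (shift s j) ! (shift h c)"
    by (rule contr_facts[OF c])
  have lt: "h < Suc m" "s < Suc m" "t < Suc m" using f(2,3,4) by simp_all
  have Sh: "S ! s ! h \<noteq> 0" "S ! t ! h \<noteq> 0" using f(9) lt by auto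
  have sq1: "S ! s ! h * S ! s ! h = 1" "S ! t ! h * S ! t ! h = 1"
    using Sh f(8) lt bnd_sq by fastforce+
  have colh: "ip S h h = 2"
  proof -
    have "ip S h h = S ! s ! h * S ! s ! h + S ! t ! h * S ! t ! h"
      unfolding ip_def f(1) by (rule sum_two) (use lt f(5) f(9) in auto)
    then show ?thesis using sq1 by simp
  qed
  have ipC: "ip S (shift h c) (shift h d) = S ! s ! shift h c * S ! s ! shift h d + ip S' c d"
    if "c < m" "d < m" for c d
    using ip_shift[OF f(1) f(3) f(11) f(13) that] .
  define G where "G = (\<Sum>c<m. S ! s ! shift h c * S ! s ! shift h c)"
  have ns: "- dot (S ! s) (S ! s) = S ! s ! h * S ! s ! h + G"
  proof -
    have "length (S ! s) = Suc m" using f(6) lt by simp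
    then show ?thesis unfolding ndot G_def by (simp only: sum_shift[OF f(2)])
  qed
  have totS: "(\<Sum>j<length S. - dot (S ! j) (S ! j)) = ip S h h + (\<Sum>c<m. ip S (shift h c) (shift h c))"
  proof -
    have "(\<Sum>j<length S. - dot (S ! j) (S ! j)) = (\<Sum>c<Suc m. ip S c c)" using tot[of S] f(1) f(6) by simp
    then show ?thesis by (simp only: sum_shift[OF f(2)])
  qed
  have "(\<Sum>c<m. ip S (shift h c) (shift h c)) = G + (\<Sum>c<m. ip S' c c)"
    unfolding G_def by (simp add: ipC sum.distrib)
  moreover have totS': "(\<Sum>j<length S'. - dot (S' ! j) (S' ! j)) = (\<Sum>c<m. ip S' c c)"
    using tot[of S'] f(11) f(12) by simp
  ultimately have "Iinv S = 2 + G + Iinv S' + 3 * int m - 3 * int (Suc m)"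
    using totS colh Iinv_tot[of S] Iinv_tot[of S'] f(1) f(11) by simp
  then have G1: "G = 1" using I by simp
  have onlyone: "S ! s ! shift h c = 0" if "d < m" "c < m" "c \<noteq> d" "S ! s ! shift h d \<noteq> 0" for c d
  proof (rule ccontr)
    assume "S ! s ! shift h c \<noteq> 0"
    then have "2 \<le> (\<Sum>k\<in>{c, d}. S ! s ! shift h k * S ! s ! shift h k)"
      using that sq_pos[of "S ! s ! shift h c"] sq_pos[of "S ! s ! shift h d"] by simp
    also have "\<dots> \<le> G" unfolding G_def using that by (intro sq_sum_ge) auto
    finally show False using G1 by simp
  qed
  have hD: "\<bar>ip S h D\<bar> \<le> 1" if D: "D < Suc m" "D \<noteq> h" for D
  proof -
    obtain d where d: "d < m" "D = shift h d" using shift_surj[OF D f(2)] by blast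
    have ipSh: "ip S h D = S ! s ! h * S ! s ! D + S ! t ! h * S ! t ! D"
      unfolding ip_def f(1) by (rule sum_two) (use lt f(5) f(9) in auto)
    show ?thesis
    proof (cases "S ! s ! D = 0")
      case True then show ?thesis using ipSh f(8) lt D by (simp add: abs_prod_le1)
    next
      case False
      show ?thesis
      proof (rule ccontr)
        assume big: "\<not> \<bar>ip S h D\<bar> \<le> 1"
        have "dot (S ! s) (S ! t) = - (S ! s ! h * S ! t ! h + S ! s ! D * S ! t ! D)"
        proof -
          have "(\<Sum>k<Suc m. S ! s ! k * S ! t ! k) = S ! s ! h * S ! t ! h + S ! s ! D * S ! t ! D"
          proof (rule sum_two)
            fix k assume k: "k < Suc m" "k \<noteq> h" "k \<noteq> D"
            obtain c where c: "c < m" "k = shift h c" using shift_surj[OF k(1,2) f(2)] by blast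
            have "c \<noteq> d" using c d k(3) by auto
            then have "S ! s ! k = 0" using onlyone[OF d(1) c(1)] False c d by simp
            then show "S ! s ! k * S ! t ! k = 0" by simp
          qed (use lt D in auto)
          then show ?thesis unfolding dot_def using f(6) lt by simp
        qed
        moreover have "- (S ! s ! h * S ! t ! h + S ! s ! D * S ! t ! D) \<notin> {0, 1}"
          by (rule pm4) (use f(8) lt D Sh False big ipSh in auto)
        moreover have "dot (S ! s) (S ! t) \<in> {0, 1}" using condC_dot[OF f(7)] lt f(1,5) by simp
        ultimately show False by simp
      qed
    qed
  qed
  show ?thesis unfolding Inv_def f(1)
  proof (intro conjI allI impI)
    fix C assume C: "C < Suc m"
    show "2 \<le> ip S C C"
    proof (cases "C = h")
      case True then show ?thesis using colh by simp
    next
      case False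
      obtain c where c: "c < m" "C = shift h c" using shift_surj[OF C False f(2)] by blast
      have "2 \<le> ip S' c c" using inv c(1) f(11) unfolding Inv_def by blast
      moreover have "0 \<le> S ! s ! C * S ! s ! C" by simp
      moreover have "ip S C C = S ! s ! C * S ! s ! C + ip S' c c" using ipC[OF c(1) c(1)] c(2) by simp
      ultimately show ?thesis by linarith
    qed
  next
    fix C D assume CD: "C < Suc m" "D < Suc m" "C \<noteq> D"
    show "\<bar>ip S C D\<bar> \<le> 1"
    proof (cases "C = h")
      case True then show ?thesis using hD CD by simp
    next
      case Ch: False
      show ?thesis
      proof (cases "D = h")
        case True then show ?thesis using hD[of C] CD Ch ip_sym[of S C D] by simp
      next
        case Dh: False
        obtain c where c: "c < m" "C = shift h c" using shift_surj[OF CD(1) Ch f(2)] by blast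
        obtain d where d: "d < m" "D = shift h d" using shift_surj[OF CD(2) Dh f(2)] by blast
        have cd: "c \<noteq> d" using c d CD(3) by auto
        have "S ! s ! C * S ! s ! D = 0"
        proof (cases "S ! s ! D = 0")
          case False then show ?thesis using onlyone[OF d(1) c(1) cd] c d by simp
        qed simp
        moreover have "\<bar>ip S' c d\<bar> \<le> 1" using inv c(1) d(1) cd f(11) unfolding Inv_def by blast
        moreover have "ip S C D = S ! s ! C * S ! s ! D + ip S' c d" using ipC[OF c(1) d(1)] c(2) d(2) by simp
        ultimately show ?thesis by (simp del: mult_eq_0_iff)
      qed
    qed
  qed
qed


lemma pm2:
  fixes xa xb ya yb :: int
  assumes "xa = 1 \<or> xa = -1" "xb = 1 \<or> xb = -1" "\<bar>ya\<bar> \<le> 1" "\<bar>yb\<bar> \<le> 1" "xa * ya + xb * yb = 0"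
  shows "ya * yb = - (xa * xb) * (yb * yb)"
proof -
  have "ya = 1 \<or> ya = 0 \<or> ya = -1" "yb = 1 \<or> yb = 0 \<or> yb = -1" using assms(3,4) by auto
  then show ?thesis using assms(1,2,5) by (elim disjE) auto
qed

lemma pm3:
  fixes xa xb xh zh ya yb :: int
  assumes "xa = 1 \<or> xa = -1" "xb = 1 \<or> xb = -1" "xh = 1 \<or> xh = -1" "zh = 1 \<or> zh = -1"
    "\<bar>ya\<bar> \<le> 1" "\<bar>yb\<bar> \<le> 1" "xh * zh + xa * ya + xb * yb = 0"
  shows "ya = 0 \<or> yb = 0"
proof -
  have "ya = 1 \<or> ya = 0 \<or> ya = -1" "yb = 1 \<or> yb = 0 \<or> yb = -1" using assms(5,6) by auto
  then show ?thesis using assms(1-4,7) by (elim disjE) auto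
qed

lemma sq_card:
  assumes "\<forall>k<N. \<bar>v ! k\<bar> \<le> (1::int)"
  shows "(\<Sum>k<N. v ! k * v ! k) = int (card {k. k < N \<and> v ! k \<noteq> 0})"
proof -
  have "(\<Sum>k<N. v ! k * v ! k) = (\<Sum>k<N. if v ! k \<noteq> 0 then 1 else 0)"
  proof (intro sum.cong refl)
    fix k assume "k \<in> {..<N}"
    then have "\<bar>v ! k\<bar> \<le> 1" using assms by simp
    then show "v ! k * v ! k = (if v ! k \<noteq> 0 then 1 else 0)" using bnd_sq[of "v ! k"] by auto
  qed
  also have "\<dots> = (\<Sum>k\<in>{k \<in> {..<N}. v ! k \<noteq> 0}. (1::int))"
    using sum.inter_filter[of "{..<N}" "\<lambda>_. (1::int)" "\<lambda>k. v ! k \<noteq> 0", symmetric] by simp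
  also have "\<dots> = int (card {k \<in> {..<N}. v ! k \<noteq> 0})" by simp
  also have "{k \<in> {..<N}. v ! k \<noteq> 0} = {k. k < N \<and> v ! k \<noteq> 0}" by auto
  finally show ?thesis .
qed

lemma final_contra:
  assumes c: "contraction_by S S' s" and iso: "isolated S s" and a3: "dot (S ! s) (S ! s) = -3"
    and inv: "Inv S'"
  shows False
proof -
  obtain h t m where f: "length S = Suc m" "h \<le> m" "s \<le> m" "t \<le> m" "s \<noteq> t"
    "\<forall>j<Suc m. length (S ! j) = Suc m" "condC S"
    "\<forall>j<Suc m. \<forall>c<Suc m. \<bar>S ! j ! c\<bar> \<le> 1"
    "\<forall>j<Suc m. S ! j ! h \<noteq> 0 \<longleftrightarrow> (j = s \<or> j = t)"
    "- dot (S ! t) (S ! t) > 2"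
    "length S' = m" "\<forall>j<m. length (S' ! j) = m"
    "\<forall>j<m. \<forall>c<m. S' ! j ! c = S ! (shift s j) ! (shift h c)"
    by (rule contr_facts[OF c])
  have lt: "h < Suc m" "s < Suc m" "t < Suc m" using f(2,3,4) by simp_all
  have Sh: "S ! s ! h \<noteq> 0" "S ! t ! h \<noteq> 0" using f(9) lt by auto
  have pm: "x = 1 \<or> x = -1" if "j < Suc m" "c < Suc m" "x = S ! j ! c" "x \<noteq> 0" for j c x
    using that f(8) bnd_sq by blast
  define K where "K = {k. k < Suc m \<and> S ! s ! k \<noteq> 0}"
  have "int (card K) = 3"
  proof -
    have ls: "length (S ! s) = Suc m" using f(6) lt by simp
    have bs: "\<forall>k<Suc m. \<bar>S ! s ! k\<bar> \<le> 1" using f(8) lt by simp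
    have "- dot (S ! s) (S ! s) = int (card K)"
      unfolding ndot K_def ls by (rule sq_card[OF bs])
    then show ?thesis using a3 by simp
  qed
  then have "card K = 3" by simp
  moreover have hK: "h \<in> K" using Sh lt K_def by simp
  moreover have "finite K" unfolding K_def by simp
  ultimately have "card (K - {h}) = 2" by simp
  then obtain a b where ab: "K - {h} = {a, b}" "a \<noteq> b" by (meson card_2_iff)
  have abK: "a < Suc m" "b < Suc m" "a \<noteq> h" "b \<noteq> h" "S ! s ! a \<noteq> 0" "S ! s ! b \<noteq> 0"
    using ab unfolding K_def by blast+
  have zero: "S ! s ! k = 0" if "k < Suc m" "k \<noteq> h" "k \<noteq> a" "k \<noteq> b" for k
    using that ab unfolding K_def by blast
  have orth: "dot (S ! s) (S ! r) = 0" if r: "r < Suc m" "r \<noteq> s" for r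
  proof -
    have nn: "\<forall>i\<in>{..<Suc m} - {s}. 0 \<le> dot (S ! i) (S ! s)"
    proof
      fix i assume "i \<in> {..<Suc m} - {s}"
      then have "dot (S ! i) (S ! s) \<in> {0, 1}" using condC_dot[OF f(7)] f(1) lt by auto
      then show "0 \<le> dot (S ! i) (S ! s)" by auto
    qed
    have "(\<Sum>i\<in>{..<Suc m} - {s}. dot (S ! i) (S ! s)) = 0"
      using iso f(1) unfolding isolated_def degree_def by simp
    then have "\<forall>i\<in>{..<Suc m} - {s}. dot (S ! i) (S ! s) = 0"
      using sum_nonneg_eq_0_iff[of "{..<Suc m} - {s}" "\<lambda>i. dot (S ! i) (S ! s)"] nn by auto
    then have "dot (S ! r) (S ! s) = 0" using r by simp
    then show ?thesis using dot_sym[of "S ! r" "S ! s"] f(6) r lt by simp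
  qed
  have dexp: "dot (S ! s) (S ! r) = - (S ! s ! h * S ! r ! h + S ! s ! a * S ! r ! a + S ! s ! b * S ! r ! b)"
    if r: "r < Suc m" for r
  proof -
    have "(\<Sum>k<Suc m. S ! s ! k * S ! r ! k) = (\<Sum>k\<in>{h, a, b}. S ! s ! k * S ! r ! k)"
      by (rule sum_sub) (use lt abK zero in auto)
    also have "\<dots> = S ! s ! h * S ! r ! h + S ! s ! a * S ! r ! a + S ! s ! b * S ! r ! b"
      using abK ab(2) by (simp add: add.assoc)
    finally show ?thesis unfolding dot_def using f(6) lt by simp
  qed
  have xs: "S ! s ! h = 1 \<or> S ! s ! h = -1" "S ! s ! a = 1 \<or> S ! s ! a = -1" "S ! s ! b = 1 \<or> S ! s ! b = -1"
    using pm lt abK Sh by blast+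
  have core: False if tb: "S ! t ! b' = 0" and ab': "a' \<noteq> b'" "a' \<in> {a, b}" "b' \<in> {a, b}" for a' b'
  proof -
    define \<kappa> where "\<kappa> = - (S ! s ! a' * S ! s ! b')"
    have k1: "\<bar>\<kappa>\<bar> = 1" using xs ab' unfolding \<kappa>_def by auto
    have abl: "a' < Suc m" "b' < Suc m" "a' \<noteq> h" "b' \<noteq> h" using abK ab' by auto
    have xs': "S ! s ! a' = 1 \<or> S ! s ! a' = -1" "S ! s ! b' = 1 \<or> S ! s ! b' = -1" using xs ab' by auto
    have rel: "S ! r ! a' * S ! r ! b' = \<kappa> * (S ! r ! b' * S ! r ! b')" if r: "r < Suc m" "r \<noteq> s" for r
    proof (cases "r = t")
      case True then show ?thesis using \<open>S ! t ! b' = 0\<close> by simp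
    next
      case False
      then have "S ! r ! h = 0" using f(9) r by auto
      moreover have "dot (S ! s) (S ! r) = 0" using orth r by simp
      ultimately have "S ! s ! a * S ! r ! a + S ! s ! b * S ! r ! b = 0" using dexp[OF r(1)] by simp
      then have eq: "S ! s ! a' * S ! r ! a' + S ! s ! b' * S ! r ! b' = 0" using ab' by auto
      have "\<bar>S ! r ! a'\<bar> \<le> 1" "\<bar>S ! r ! b'\<bar> \<le> 1" using f(8) r abl by auto
      from pm2[OF xs' this eq] show ?thesis unfolding \<kappa>_def .
    qed
    obtain a0 where a0: "a0 < m" "a' = shift h a0" using shift_surj[OF abl(1,3) f(2)] by blast
    obtain b0 where b0: "b0 < m" "b' = shift h b0" using shift_surj[OF abl(2,4) f(2)] by blast
    have "a0 \<noteq> b0" using a0 b0 ab'(1) by auto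
    have "ip S' a0 b0 = (\<Sum>j<m. S ! shift s j ! a' * S ! shift s j ! b')"
      unfolding ip_def f(11) using f(13) a0 b0 by (intro sum.cong) auto
    also have "\<dots> = (\<Sum>j<m. \<kappa> * (S ! shift s j ! b' * S ! shift s j ! b'))"
      using rel f(3) by (intro sum.cong) (auto simp: shift_lt shift_ne)
    also have "\<dots> = \<kappa> * ip S' b0 b0"
      unfolding ip_def f(11) using f(13) b0 by (simp add: sum_distrib_left)
    finally have e: "\<bar>ip S' a0 b0\<bar> = \<bar>ip S' b0 b0\<bar>" using k1 by (simp add: abs_mult)
    have "2 \<le> ip S' b0 b0" "\<bar>ip S' a0 b0\<bar> \<le> 1"
      using inv a0 b0 \<open>a0 \<noteq> b0\<close> f(11) unfolding Inv_def by blast+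
    then show False using e by simp
  qed
  have "S ! s ! h * S ! t ! h + S ! s ! a * S ! t ! a + S ! s ! b * S ! t ! b = 0"
    using orth[of t] dexp[of t] lt f(5) by simp
  moreover have "S ! t ! h = 1 \<or> S ! t ! h = -1" using pm lt Sh by blast
  moreover have "\<bar>S ! t ! a\<bar> \<le> 1" "\<bar>S ! t ! b\<bar> \<le> 1" using f(8) lt abK by auto
  ultimately have "S ! t ! a = 0 \<or> S ! t ! b = 0"
    using pm3[OF xs(2) xs(3) xs(1)] by blast
  then show False using core[of b a] core[of a b] ab(2) by auto
qed


lemma sum3:
  fixes g :: "nat \<Rightarrow> int"
  assumes "c < 3" "d < 3" "e < 3" "c \<noteq> d" "c \<noteq> e" "d \<noteq> e"
  shows "(\<Sum>k<3. g k) = g c + g d + g e"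
proof -
  have "{..<3::nat} = {c, d, e}" using assms by auto
  then show ?thesis using assms by (simp add: add.assoc)
qed

lemma sum012: "(\<Sum>k<3. g k) = g 0 + g 1 + (g (2::nat) :: int)"
  by (rule sum3) auto

lemma third: assumes "c < 3" "d < (3::nat)" "c \<noteq> d" shows "\<exists>e<3. e \<noteq> c \<and> e \<noteq> d"
proof -
  have "3 - c - d < 3 \<and> 3 - c - d \<noteq> c \<and> 3 - c - d \<noteq> d" using assms by arith
  then show ?thesis by blast
qed

lemma others: assumes "c < (3::nat)" shows "\<exists>d e. d < 3 \<and> e < 3 \<and> d \<noteq> c \<and> e \<noteq> c \<and> d \<noteq> e"
proof -
  have "c = 0 \<or> c = 1 \<or> c = 2" using assms by auto
  then show ?thesis
  proof (elim disjE)
    assume "c = 0" then show ?thesis by (intro exI[of _ 1] exI[of _ 2]) simp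
  next
    assume "c = 1" then show ?thesis by (intro exI[of _ 0] exI[of _ 2]) simp
  next
    assume "c = 2" then show ?thesis by (intro exI[of _ 0] exI[of _ 1]) simp
  qed
qed

lemma sq_le3: "(x::int) * x \<le> 3 \<Longrightarrow> \<bar>x\<bar> \<le> 1"
proof (rule ccontr)
  assume a: "x * x \<le> 3" "\<not> \<bar>x\<bar> \<le> 1"
  then have "2 \<le> \<bar>x\<bar>" by simp
  then have "2 * 2 \<le> \<bar>x\<bar> * \<bar>x\<bar>" by (intro mult_mono) auto
  then show False using a(1) by (simp add: abs_mult_self_eq)
qed

lemma Kint:
  fixes a1 b1 e1 a2 b2 e2 :: int
  assumes "\<bar>a1\<bar> \<le> 1" "\<bar>b1\<bar> \<le> 1" "\<bar>e1\<bar> \<le> 1" "\<bar>a2\<bar> \<le> 1" "\<bar>b2\<bar> \<le> 1" "\<bar>e2\<bar> \<le> 1"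
    "a1 * b1 = a2 * b2" "a1 * b1 \<noteq> 0"
    "(a1 * a1 + b1 * b1 + e1 * e1) + (a2 * a2 + b2 * b2 + e2 * e2) \<le> 5"
    "- (a1 * a2 + b1 * b2 + e1 * e2) \<in> {0, 1}"
  shows False
proof -
  have nz: "a1 \<noteq> 0" "b1 \<noteq> 0" "a2 \<noteq> 0" "b2 \<noteq> 0" using assms(7,8) by auto
  have "a1 = 1 \<or> a1 = -1" "b1 = 1 \<or> b1 = -1" "a2 = 1 \<or> a2 = -1" "b2 = 1 \<or> b2 = -1"
    using nz assms(1,2,4,5) by auto
  moreover have "e1 = 1 \<or> e1 = 0 \<or> e1 = -1" "e2 = 1 \<or> e2 = 0 \<or> e2 = -1" using assms(3,6) by auto
  ultimately show False using assms(7,9,10) by (elim disjE) auto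
qed

lemma ip3:
  fixes p0 p1 p2 :: int
  assumes "\<bar>p0\<bar> \<le> 1" "\<bar>p1\<bar> \<le> 1" "\<bar>p2\<bar> \<le> 1"
    "\<not> (p0 = p1 \<and> p0 \<noteq> 0)" "\<not> (p0 = p2 \<and> p0 \<noteq> 0)" "\<not> (p1 = p2 \<and> p1 \<noteq> 0)"
  shows "\<bar>p0 + p1 + p2\<bar> \<le> 1"
  using assms by auto

lemma base_inv:
  assumes D: "inD 3 S" and C: "condC S" and I: "Iinv S = -2"
  shows "Inv S"
proof -
  have L: "length S = 3" "\<forall>j<3. length (S ! j) = 3" using D unfolding inD_def by auto
  define N where "N j = - dot (S ! j) (S ! j)" for j
  have Nsum: "N j = (\<Sum>c<3. S ! j ! c * S ! j ! c)" if "j < 3" for j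
    unfolding N_def ndot using L that by simp
  have N2: "2 \<le> N j" if "j < 3" for j using C L that unfolding condC_def N_def by fastforce
  have "(\<Sum>j<3. N j) - 9 = -2" using I Iinv_tot[of S] L unfolding N_def by simp
  then have N7: "N 0 + N 1 + N 2 = 7" by (simp add: sum012)
  have Npair: "N i + N j \<le> 5" if ij: "i < 3" "j < 3" "i \<noteq> j" for i j
  proof -
    obtain k where k: "k < 3" "k \<noteq> i" "k \<noteq> j" using third[OF ij] by blast
    have "(\<Sum>j<3. N j) = N i + N j + N k" by (rule sum3) (use ij k in auto)
    then show ?thesis using N7 N2[OF k(1)] sum012[of N] by simp
  qed
  have N3: "N j \<le> 3" if jj: "j < 3" for j
  proof -
    obtain i where "i < 3" "i \<noteq> j" using others[OF jj] by blast
    then show ?thesis using Npair[of i j] N2[of i] jj by simp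
  qed
  have bnd: "\<bar>S ! j ! c\<bar> \<le> 1" if "j < 3" "c < 3" for j c
  proof -
    have "(\<Sum>k\<in>{c}. S ! j ! k * S ! j ! k) \<le> (\<Sum>k<3. S ! j ! k * S ! j ! k)"
      by (rule sq_sum_ge) (use that in auto)
    then have "S ! j ! c * S ! j ! c \<le> 3" using Nsum[OF that(1)] N3[OF that(1)] by simp
    then show ?thesis by (rule sq_le3)
  qed
  have noK: "\<not> (S ! i ! c * S ! i ! d = S ! j ! c * S ! j ! d \<and> S ! i ! c * S ! i ! d \<noteq> 0)"
    if ij: "i < 3" "j < 3" "i \<noteq> j" and cd: "c < 3" "d < 3" "c \<noteq> d" for i j c d
  proof
    assume h: "S ! i ! c * S ! i ! d = S ! j ! c * S ! j ! d \<and> S ! i ! c * S ! i ! d \<noteq> 0"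
    obtain e where e: "e < 3" "e \<noteq> c" "e \<noteq> d" using third[OF cd] by blast
    have s3: "(\<Sum>k<3. g k) = g c + g d + g e" for g :: "nat \<Rightarrow> int"
      by (rule sum3) (use cd e in auto)
    have "dot (S ! i) (S ! j) \<in> {0, 1}" using condC_dot[OF C] ij L by simp
    then have dd: "- (S ! i ! c * S ! j ! c + S ! i ! d * S ! j ! d + S ! i ! e * S ! j ! e) \<in> {0, 1}"
      unfolding dot_def using L ij s3 by simp
    have nn: "(S ! i ! c * S ! i ! c + S ! i ! d * S ! i ! d + S ! i ! e * S ! i ! e) +
        (S ! j ! c * S ! j ! c + S ! j ! d * S ! j ! d + S ! j ! e * S ! j ! e) \<le> 5"
      using Npair[OF ij] Nsum[OF ij(1)] Nsum[OF ij(2)] s3 by simp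
    show False
      by (rule Kint[OF bnd[OF ij(1) cd(1)] bnd[OF ij(1) cd(2)] bnd[OF ij(1) e(1)]
            bnd[OF ij(2) cd(1)] bnd[OF ij(2) cd(2)] bnd[OF ij(2) e(1)] _ _ nn dd]) (use h in auto)
  qed
  have ipc: "ip S c d = S ! 0 ! c * S ! 0 ! d + S ! 1 ! c * S ! 1 ! d + S ! 2 ! c * S ! 2 ! d" for c d
    unfolding ip_def L(1) by (rule sum012)
  show ?thesis unfolding Inv_def L(1)
  proof (intro conjI allI impI)
    fix c d :: nat assume cd: "c < 3" "d < 3" "c \<noteq> d"
    show "\<bar>ip S c d\<bar> \<le> 1" unfolding ipc
    proof (rule ip3)
      show "\<not> (S ! 0 ! c * S ! 0 ! d = S ! 1 ! c * S ! 1 ! d \<and> S ! 0 ! c * S ! 0 ! d \<noteq> 0)"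
        using noK[of 0 1 c d] cd by simp
      show "\<not> (S ! 0 ! c * S ! 0 ! d = S ! 2 ! c * S ! 2 ! d \<and> S ! 0 ! c * S ! 0 ! d \<noteq> 0)"
        using noK[of 0 2 c d] cd by simp
      show "\<not> (S ! 1 ! c * S ! 1 ! d = S ! 2 ! c * S ! 2 ! d \<and> S ! 1 ! c * S ! 1 ! d \<noteq> 0)"
        using noK[of 1 2 c d] cd by simp
    qed (use abs_prod_le1 bnd cd in auto)
  next
    fix c :: nat assume c: "c < 3"
    show "2 \<le> ip S c c"
    proof (rule ccontr)
      assume small: "\<not> 2 \<le> ip S c c"
      obtain d e where de: "d < 3" "e < 3" "d \<noteq> c" "e \<noteq> c" "d \<noteq> e" using others[OF c] by blast
      have "(\<Sum>j<3. N j) = (\<Sum>c<3. ip S c c)" using tot[of S] L unfolding N_def by simp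
      also have "\<dots> = ip S c c + ip S d d + ip S e e" by (rule sum3) (use c de in auto)
      finally have "ip S c c + ip S d d + ip S e e = 7" using N7 sum012[of N] by simp
      have sq01: "0 \<le> S ! j ! x * S ! j ! x \<and> S ! j ! x * S ! j ! x \<le> 1" if "j < 3" "x < 3" for j x
        using bnd[OF that] abs_prod_le1[of "S ! j ! x" "S ! j ! x"] by simp
      have full: "S ! j ! x \<noteq> 0" if x: "x < 3" "ip S x x = 3" and j: "j < 3" for x j
      proof
        assume z: "S ! j ! x = 0"
        have "ip S x x = S ! 0 ! x * S ! 0 ! x + S ! 1 ! x * S ! 1 ! x + S ! 2 ! x * S ! 2 ! x" by (rule ipc)
        moreover have "j = 0 \<or> j = 1 \<or> j = 2" using j by auto
        ultimately show False using sq01[of 0 x] sq01[of 1 x] sq01[of 2 x] z x by auto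
      qed
      have le3: "ip S x x \<le> 3" if "x < 3" for x
        using ipc[of x x] sq01[of 0 x] sq01[of 1 x] sq01[of 2 x] that by simp
      have "ip S d d = 3" "ip S e e = 3"
        using le3[OF de(1)] le3[OF de(2)] small \<open>ip S c c + ip S d d + ip S e e = 7\<close> by simp_all
      then have nz: "S ! j ! d \<noteq> 0" "S ! j ! e \<noteq> 0" if "j < 3" for j
        using full de that by auto
      have pm: "S ! j ! d * S ! j ! e = 1 \<or> S ! j ! d * S ! j ! e = -1" if "j < 3" for j
      proof -
        have "S ! j ! d = 1 \<or> S ! j ! d = -1" "S ! j ! e = 1 \<or> S ! j ! e = -1"
          using bnd_sq bnd de that nz by blast+
        then show ?thesis by auto
      qed
      have "S ! 0 ! d * S ! 0 ! e = S ! 1 ! d * S ! 1 ! e \<or> S ! 0 ! d * S ! 0 ! e = S ! 2 ! d * S ! 2 ! e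
          \<or> S ! 1 ! d * S ! 1 ! e = S ! 2 ! d * S ! 2 ! e"
        using pm[of 0] pm[of 1] pm[of 2] by auto
      then show False using noK[of 0 1 d e] noK[of 0 2 d e] noK[of 1 2 d e] de pm[of 0] pm[of 1] by auto
    qed
  qed
qed


theorem lemma4p6:
  fixes n :: nat and Ss :: "nat \<Rightarrow> int list list"
  assumes "3 \<le> n"
    and "\<forall>k\<in>{3..n}. inD k (Ss k)"
    and "\<forall>k\<in>{3..<n}. expansion (Ss k) (Ss (Suc k))"
    and "\<forall>k\<in>{3..n}. good (Ss k) \<and> nbad (Ss k) = 0 \<and> Iinv (Ss k) = -2 \<and> ncomp (Ss k) = 2"
  shows "\<not> (\<exists>S. inD (n + 1) S \<and> expansion_isolated 3 (Ss n) S)"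
proof
  assume "\<exists>S. inD (n + 1) S \<and> expansion_isolated 3 (Ss n) S"
  then obtain S s where S: "contraction_by S (Ss n) s" "isolated S s" "dot (S ! s) (S ! s) = -3"
    unfolding expansion_isolated_def by auto
  have inv: "k \<le> n \<longrightarrow> Inv (Ss k)" if "3 \<le> k" for k
    using that
  proof (induction k rule: nat_induct_at_least)
    case base
    show ?case
    proof
      assume "3 \<le> n"
      have "inD 3 (Ss 3)" using assms(2) assms(1) by auto
      moreover have "condC (Ss 3)" "Iinv (Ss 3) = -2" using assms(4) assms(1) unfolding good_def by auto
      ultimately show "Inv (Ss 3)" by (rule base_inv)
    qed
  next
    case (Suc k)
    show ?case
    proof
      assume kn: "Suc k \<le> n"
      then have IH: "Inv (Ss k)" using Suc by simp
      have "expansion (Ss k) (Ss (Suc k))" using assms(3) Suc(1) kn by auto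
      then obtain s' where c: "contraction_by (Ss (Suc k)) (Ss k) s'"
        unfolding expansion_def contraction_def by blast
      have "Iinv (Ss (Suc k)) = Iinv (Ss k)" using assms(4) Suc(1) kn by auto
      then show "Inv (Ss (Suc k))" using step_inv[OF c _ IH] by simp
    qed
  qed
  have "Inv (Ss n)" using inv[OF assms(1)] by simp
  then show False using final_contra[OF S] by simp
qed

end
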